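(* Let $f_{SN_2}(x)=\sqrt{\frac{x^2+1}{2}}-\left(\frac{\sqrt x+1}{2}\right)\sqrt{\frac{x+1}{2}}$ for $x\in(0,\infty)$, let $f_{SN_2}^*(u)=u\,f_{SN_2}\!\left(\frac{1-u}{u}\right)$ for $u\in(0,1)$, extended by continuity to $[0,1]$ (explicitly $f_{SN_2}^*(u)=\frac{\sqrt2}{4}\left(2\sqrt{u^2+(1-u)^2}-\sqrt u-\sqrt{1-u}\right)$), and define $\overline M_{SN_2}(C_1,C_2)=E_X\{f_{SN_2}^*(P(C_2\mid x))\}$. Then $$P_e\le \frac12\left[1-\frac{4}{\sqrt2}\,\overline M_{SN_2}(C_1,C_2)\right].$$
   Context: Two-class decision problem: classes $C_1,C_2$, an observation $x$ in a space $\mathrm X$ with density $p(x)$, and a posteriori probabilities $P(C_1\mid x),P(C_2\mid x)\ge0$ with $P(C_1\mid x)+P(C_2\mid x)=1$. $E_X\{g(x)\}=\int_{\mathrm X} g(x)p(x)\,dx$. $P_e=E_X\{\min(P(C_1\mid x),P(C_2\mid x))\}$ is the Bayesian probability of error. *)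

theory Defs
  imports "HOL-Probability.Probability"
begin

definition fSN2 :: "real \<Rightarrow> real" where
  "fSN2 x = sqrt ((x\<^sup>2 + 1) / 2) - ((sqrt x + 1) / 2) * sqrt ((x + 1) / 2)"

definition fSN2_star :: "real \<Rightarrow> real" where
  "fSN2_star u = (if 0 < u \<and> u < 1 then u * fSN2 ((1 - u) / u)
     else sqrt 2 / 4 * (2 * sqrt (u\<^sup>2 + (1 - u)\<^sup>2) - sqrt u - sqrt (1 - u)))"

definition M_SN2 :: "'a measure \<Rightarrow> ('a \<Rightarrow> real) \<Rightarrow> real" where
  "M_SN2 M P2 = (\<integral>x. fSN2_star (P2 x) \<partial>M)"

definition bayes_error :: "'a measure \<Rightarrow> ('a \<Rightarrow> real) \<Rightarrow> ('a \<Rightarrow> real) \<Rightarrow> real" where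
  "bayes_error M P1 P2 = (\<integral>x. min (P1 x) (P2 x) \<partial>M)"

end

theory Submission
  imports Defs
begin
lemma poly: fixes a b :: real assumes "a^2+b^2=1"
  shows "(b+a)^2*(b-a+1)^2 - 4*(a^4+b^4) = (b-a)*(1-(b-a))*(4+(b-a)-(b-a)^2)"
  using assms by algebra
lemma key: fixes a b :: real assumes "a\<ge>0" "a\<le>b" "a^2+b^2=1"
  shows "2*a^2 + 2* sqrt(a^4+b^4) \<le> 1+a+b"
proof -
  have q1: "b-a \<le> 1"
  proof -
    have "(b-a)^2 \<le> 1^2" using assms by (simp add: power2_eq_square algebra_simps)
    thus ?thesis using assms by (smt (verit) power2_le_imp_le)
  qed
  have nn: "0 \<le> (b-a)*(1-(b-a))*(4+(b-a)-(b-a)^2)"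
    using assms q1 by (intro mult_nonneg_nonneg) (auto simp: power2_eq_square intro!: mult_nonneg_nonneg, smt (verit) mult_left_le_one_le)
  have "a^2 \<le> b^2" using assms by (intro power_mono) auto
  hence r: "0 \<le> (b^2-a^2+a+b)/2" using assms by (smt (verit) divide_nonneg_pos)
  have "a^4+b^4 \<le> ((b^2-a^2+a+b)/2)^2"
  proof -
    have "(b^2-a^2+a+b) = (b+a)*(b-a+1)" by (simp add: power2_eq_square algebra_simps)
    hence "((b^2-a^2+a+b)/2)^2 = (b+a)^2*(b-a+1)^2/4" by (simp add: power_divide power_mult_distrib)
    thus ?thesis using poly[OF assms(3)] nn by simp
  qed
  hence "sqrt(a^4+b^4) \<le> (b^2-a^2+a+b)/2" using r by (metis real_le_lsqrt real_sqrt_le_iff  real_sqrt_abs abs_of_nonneg real_sqrt_le_mono)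
  thus ?thesis using assms by simp
qed
definition g :: "real \<Rightarrow> real" where
  "g u = sqrt 2 / 4 * (2 * sqrt (u\<^sup>2 + (1 - u)\<^sup>2) - sqrt u - sqrt (1 - u))"

lemma star_eq: assumes "0 \<le> u" "u \<le> 1" shows "fSN2_star u = g u"
proof (cases "0 < u \<and> u < 1")
  case True
  hence u: "0<u" "u<1" by auto
  have a: "((1-u)/u)^2 + 1 = (u^2+(1-u)^2)/u^2" using u by (simp add: field_simps power2_eq_square)
  have b: "(1-u)/u + 1 = 1/u" using u by (simp add: field_simps)
  have "u * fSN2 ((1 - u) / u) = u*(sqrt ((u^2+(1-u)^2)/2)/u) - (sqrt(1-u)/sqrt u + 1)/2 * (u* sqrt(1/(2*u)))"
    unfolding fSN2_def a b using u
    by (simp add: real_sqrt_divide real_sqrt_mult algebra_simps)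
  also have "u* sqrt(1/(2*u)) = sqrt u / sqrt 2" using u
    by (simp add: real_sqrt_divide real_sqrt_mult field_simps)
  finally have e1: "u * fSN2 ((1 - u) / u) = sqrt ((u^2+(1-u)^2)/2) - ((sqrt(1-u)/sqrt u + 1) * sqrt u)/(2* sqrt 2)"
    using u by simp
  have e2: "(sqrt(1-u)/sqrt u + 1) * sqrt u = sqrt(1-u) + sqrt u" using u by (simp add: field_simps)
  have "u * fSN2 ((1 - u) / u) = sqrt ((u^2+(1-u)^2)/2) - (sqrt(1-u) + sqrt u)/(2* sqrt 2)"
    using e1 unfolding e2 .
  also have "... = g u" unfolding g_def
    by (simp add: real_sqrt_divide field_simps)
  finally show ?thesis using True by (simp add: fSN2_star_def)
next
  case False show ?thesis unfolding fSN2_star_def g_def if_not_P[OF False] ..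
qed

lemma half: fixes u :: real assumes "0 \<le> u" "u \<le> 1/2"
  shows "2*u + 2* sqrt(u\<^sup>2 + (1 - u)\<^sup>2) \<le> 1 + sqrt u + sqrt (1-u)"
proof -
  define a where "a = sqrt u"
  define b where "b = sqrt (1-u)"
  have a2: "a^2 = u" and b2: "b^2 = 1-u" using assms by (auto simp: a_def b_def)
  have "a \<le> b" unfolding a_def b_def using assms by simp
  moreover have "a^4 = u^2" "b^4 = (1-u)^2" using a2 b2 by (metis power_mult numeral_times_numeral semiring_norm(12) num_double)+
  ultimately show ?thesis using key[of a b] a2 b2 by (simp add: a_def b_def)
qed

lemma point: fixes u :: real assumes "0 \<le> u" "u \<le> 1"
  shows "min (1-u) u \<le> 1/2 * (1 - 4 / sqrt 2 * g u)"
proof -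
  have e: "4 / sqrt 2 * g u = 2 * sqrt (u\<^sup>2 + (1 - u)\<^sup>2) - sqrt u - sqrt (1 - u)"
    unfolding g_def by simp
  show ?thesis
  proof (cases "u \<le> 1/2")
    case True thus ?thesis using half[of u] assms unfolding e by simp
  next
    case False
    hence "2*(1-u) + 2* sqrt((1-u)\<^sup>2 + (1 - (1-u))\<^sup>2) \<le> 1 + sqrt (1-u) + sqrt (1-(1-u))"
      using half[of "1-u"] assms by simp
    thus ?thesis using False unfolding e by (simp add: add.commute)
  qed
qed
lemma gbound: fixes u :: real assumes "0 \<le> u \<and> u \<le> 1" shows "\<bar>g u\<bar> \<le> 10"
proof -
  have u: "0 \<le> u" "u \<le> 1" using assms by auto
  have h1: "sqrt u \<le> 1" "sqrt (1 - u) \<le> 1" "0 \<le> sqrt u" "0 \<le> sqrt (1-u)" using u by auto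
  have "u\<^sup>2 \<le> 1" "(1-u)\<^sup>2 \<le> 1" using u by (auto intro: power_le_one)
  hence "sqrt (u\<^sup>2 + (1 - u)\<^sup>2) \<le> sqrt 4" by (intro real_sqrt_le_mono) simp
  hence h2: "sqrt (u\<^sup>2 + (1 - u)\<^sup>2) \<le> 2" by simp
  have h3: "sqrt 2 \<le> 2" using real_sqrt_le_mono[of 2 4] by simp
  have h4: "0 \<le> sqrt (u\<^sup>2 + (1 - u)\<^sup>2)" by simp
  define w where "w = 2 * sqrt (u\<^sup>2 + (1 - u)\<^sup>2) - sqrt u - sqrt (1 - u)"
  have "\<bar>w\<bar> \<le> 4" unfolding w_def using h1 h2 h4 by linarith
  hence "\<bar>sqrt 2 / 4 * w\<bar> \<le> 2 / 4 * 4" unfolding abs_mult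
    by (intro mult_mono) (use h3 in auto)
  thus ?thesis unfolding g_def w_def[symmetric] by simp
qed

theorem mainTheorem2:
  fixes M :: "'a measure" and P1 P2 :: "'a \<Rightarrow> real"
  assumes "prob_space M"
    and "P1 \<in> borel_measurable M" and "P2 \<in> borel_measurable M"
    and "\<And>x. x \<in> space M \<Longrightarrow> P1 x \<ge> 0"
    and "\<And>x. x \<in> space M \<Longrightarrow> P2 x \<ge> 0"
    and "\<And>x. x \<in> space M \<Longrightarrow> P1 x + P2 x = 1"
  shows "bayes_error M P1 P2 \<le> 1/2 * (1 - 4 / sqrt 2 * M_SN2 M P2)"
proof -
  interpret prob_space M by fact
  have r: "x \<in> space M \<Longrightarrow> 0 \<le> P2 x \<and> P2 x \<le> 1" for x using assms(4-6)[of x] by auto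
  have gm: "(\<lambda>x. g (P2 x)) \<in> borel_measurable M" unfolding g_def using assms(3) by measurable
  have gb: "\<bar>g (P2 x)\<bar> \<le> 10" if "x \<in> space M" for x
    using gbound r[OF that] by blast
  have gi: "integrable M (\<lambda>x. g (P2 x))"
    by (rule integrable_const_bound[where B=10]) (use gb gm in auto)
  have mi: "integrable M (\<lambda>x. min (P1 x) (P2 x))"
  proof (rule integrable_const_bound[where B=1])
    show "AE x in M. norm (min (P1 x) (P2 x)) \<le> 1"
    proof (rule AE_I2)
      fix x assume x: "x \<in> space M"
      show "norm (min (P1 x) (P2 x)) \<le> 1" using r[OF x] assms(4)[OF x] by auto
    qed
  qed (use assms in auto)
  have MS: "M_SN2 M P2 = (\<integral>x. g (P2 x) \<partial>M)"
    unfolding M_SN2_def by (intro Bochner_Integration.integral_cong) (auto simp: star_eq r)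
  have "bayes_error M P1 P2 \<le> (\<integral>x. 1/2 * (1 - 4 / sqrt 2 * g (P2 x)) \<partial>M)"
    unfolding bayes_error_def
  proof (rule integral_mono)
    show "integrable M (\<lambda>x. 1/2 * (1 - 4 / sqrt 2 * g (P2 x)))" using gi by auto
    fix x assume x: "x \<in> space M"
    have "P1 x = 1 - P2 x" using assms(6)[OF x] by simp
    thus "min (P1 x) (P2 x) \<le> 1/2 * (1 - 4 / sqrt 2 * g (P2 x))" using point[of "P2 x"] r[OF x] by simp
  qed (rule mi)
  also have "\<dots> = 1/2 * (1 - 4 / sqrt 2 * M_SN2 M P2)"
    unfolding MS using gi by (simp add: prob_space)
  finally show ?thesis .
qed
end
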